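(* Let $S\subseteq\Sigma^n$ be a double-MDS-code with canonical parameters $k$ and $\{K_1,\ldots,K_k\}$, $n_j=|K_j|$, and let $C\subseteq S$ be an $(n,2)_4$ MDS code. (a) If $2<k<n$, or if $k=2$ with $n_1>1$ and $n_2>1$, then $C$ is decomposable. (b) If $k=n$, then $C$ is semilinear.
   Context: Let $\Sigma=\{0,1,2,3\}$, $[n]=\{1,\ldots,n\}$. An $i$-line of $\Sigma^n$ is a set of the four words that agree in all coordinates except the $i$th; a line is an $i$-line for some $i$. An $(n,2)_4$ MDS code is a set $C\subseteq\Sigma^n$ meeting every line in exactly one element. A double-code is a set meeting every line in $0$ or $2$ elements; a double-MDS-code is a set meeting every line in exactly $2$ elements; a double-code is complementable if contained in a double-MDS-code, and prime if complementable, nonempty and not partitionable into two or more nonempty double-codes. An $n$-quasigroup is a map $g:\Sigma^n\to\Sigma$ such that, for each $i$ and each fixing of the other arguments, $x_i\mapsto g(\bar x)$ is a bijection of $\Sigma$. $\chi_S$ denotes the characteristic function, $\oplus$ addition mod 2, and for $K=\{i_1<\cdots<i_m\}\subseteq[n]$, $\bar x_K=(x_{i_1},\ldots,x_{i_m})$. A double-MDS-code $D\subseteq\Sigma^m$ is linear if $\chi_D(y_1,\ldots,y_m)=\chi_1(y_1)\oplus\cdots\oplus\chi_m(y_m)$ for some $\chi_i:\Sigma\to\{0,1\}$; an MDS code is semilinear if it is contained in some linear double-MDS-code. An $(n,2)_4$ MDS code $C$ is decomposable if there are $m\in\{2,\ldots,n-2\}$, an $m$-quasigroup $g'$, an $(n-m)$-quasigroup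 $g''$ and a permutation $\sigma$ of $[n]$ with $C=\{\bar x: g'(x_{\sigma(1)},\ldots,x_{\sigma(m)})=g''(x_{\sigma(m+1)},\ldots,x_{\sigma(n)})\}$. Canonical parameters: every double-MDS-code $S\subseteq\Sigma^n$ has a unique representation $\chi_S(\bar x)=\bigoplus_{j=1}^k\chi_{S_j}(\bar x_{K_j})\oplus\sigma_0$ with $k\in[n]$, $\{K_1,\ldots,K_k\}$ a partition of $[n]$ into nonempty sets, $S_j\subseteq\Sigma^{|K_j|}$ prime double-MDS-codes containing $\bar 0$, and $\sigma_0\in\{0,1\}$; $k$ and $\{K_j\}$ are the canonical parameters of $S$. *)

theory Defs
  imports Main
begin

(* Words of Sigma^n, Sigma = {0,1,2,3}, represented as nat lists of length n;
   coordinate i in [n] of the paper corresponds to list index i-1. *)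
definition words :: "nat \<Rightarrow> nat list set" where
  "words n = {xs. length xs = n \<and> (\<forall>a\<in>set xs. a < 4)}"

definition line :: "nat list \<Rightarrow> nat \<Rightarrow> nat list set" where
  "line x i = {x[i := a] | a. a < (4::nat)}"

definition is_line :: "nat \<Rightarrow> nat list set \<Rightarrow> bool" where
  "is_line n L \<longleftrightarrow> (\<exists>x\<in>words n. \<exists>i<n. L = line x i)"

definition mds_code :: "nat \<Rightarrow> nat list set \<Rightarrow> bool" where
  "mds_code n C \<longleftrightarrow> C \<subseteq> words n \<and> (\<forall>L. is_line n L \<longrightarrow> card (C \<inter> L) = 1)"

definition double_code :: "nat \<Rightarrow> nat list set \<Rightarrow> bool" where
  "double_code n S \<longleftrightarrow> S \<subseteq> words n \<and>
     (\<forall>L. is_line n L \<longrightarrow> card (S \<inter> L) = 0 \<or> card (S \<inter> L) = 2)"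

definition double_mds :: "nat \<Rightarrow> nat list set \<Rightarrow> bool" where
  "double_mds n S \<longleftrightarrow> S \<subseteq> words n \<and> (\<forall>L. is_line n L \<longrightarrow> card (S \<inter> L) = 2)"

definition complementable :: "nat \<Rightarrow> nat list set \<Rightarrow> bool" where
  "complementable n S \<longleftrightarrow> double_code n S \<and> (\<exists>D. double_mds n D \<and> S \<subseteq> D)"

definition prime_dc :: "nat \<Rightarrow> nat list set \<Rightarrow> bool" where
  "prime_dc n S \<longleftrightarrow> complementable n S \<and> S \<noteq> {} \<and>
     \<not> (\<exists>P. finite P \<and> card P \<ge> 2 \<and> \<Union>P = S \<and>
          (\<forall>A\<in>P. A \<noteq> {} \<and> double_code n A) \<and>
          (\<forall>A\<in>P. \<forall>B\<in>P. A \<noteq> B \<longrightarrow> A \<inter> B = {}))"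

definition quasigroup :: "nat \<Rightarrow> (nat list \<Rightarrow> nat) \<Rightarrow> bool" where
  "quasigroup m g \<longleftrightarrow> (\<forall>x\<in>words m. g x < 4) \<and>
     (\<forall>x\<in>words m. \<forall>i<m. bij_betw (\<lambda>a. g (x[i := a])) {..<4} {..<4})"

definition restrict_word :: "nat list \<Rightarrow> nat set \<Rightarrow> nat list" where
  "restrict_word x K = map (\<lambda>i. x ! i) (sorted_list_of_set K)"

(* chi_S(x) = chi_{S_1}(x_{K_1}) xor ... xor chi_{S_k}(x_{K_k}) xor sigma0,
   with {K_j} a partition of the coordinate set into nonempty sets and
   S_j prime double-MDS-codes containing the zero word *)
definition canonical_rep ::
  "nat \<Rightarrow> nat list set \<Rightarrow> nat \<Rightarrow> nat set list \<Rightarrow> nat list set list \<Rightarrow> bool \<Rightarrow> bool" where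
  "canonical_rep n S k Ks Ss s0 \<longleftrightarrow>
     1 \<le> k \<and> k \<le> n \<and> length Ks = k \<and> length Ss = k \<and>
     (\<forall>j<k. Ks ! j \<noteq> {}) \<and>
     (\<forall>j<k. \<forall>j'<k. j \<noteq> j' \<longrightarrow> Ks ! j \<inter> Ks ! j' = {}) \<and>
     (\<Union>j<k. Ks ! j) = {..<n} \<and>
     (\<forall>j<k. double_mds (card (Ks ! j)) (Ss ! j) \<and> prime_dc (card (Ks ! j)) (Ss ! j)
            \<and> replicate (card (Ks ! j)) 0 \<in> Ss ! j) \<and>
     (\<forall>x\<in>words n. (x \<in> S) \<longleftrightarrow>
        (odd (card {j. j < k \<and> restrict_word x (Ks ! j) \<in> Ss ! j}) \<noteq> s0))"

definition canonical_params :: "nat \<Rightarrow> nat list set \<Rightarrow> nat \<Rightarrow> nat set list \<Rightarrow> bool" where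
  "canonical_params n S k Ks \<longleftrightarrow> (\<exists>Ss s0. canonical_rep n S k Ks Ss s0)"

definition decomposable :: "nat \<Rightarrow> nat list set \<Rightarrow> bool" where
  "decomposable n C \<longleftrightarrow> (\<exists>m g1 g2 \<sigma>. 2 \<le> m \<and> m \<le> n - 2 \<and>
      quasigroup m g1 \<and> quasigroup (n - m) g2 \<and> bij_betw \<sigma> {..<n} {..<n} \<and>
      C = {x \<in> words n. g1 (map (\<lambda>i. x ! \<sigma> i) [0..<m]) = g2 (map (\<lambda>i. x ! \<sigma> i) [m..<n])})"

definition linear_double_mds :: "nat \<Rightarrow> nat list set \<Rightarrow> bool" where
  "linear_double_mds m D \<longleftrightarrow> double_mds m D \<and>
     (\<exists>\<chi> :: nat \<Rightarrow> nat \<Rightarrow> bool. \<forall>y\<in>words m.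
        (y \<in> D) \<longleftrightarrow> odd (card {i. i < m \<and> \<chi> i (y ! i)}))"

definition semilinear :: "nat \<Rightarrow> nat list set \<Rightarrow> bool" where
  "semilinear n C \<longleftrightarrow> mds_code n C \<and> (\<exists>D. linear_double_mds n D \<and> C \<subseteq> D)"

end

theory Submission
  imports Defs
begin


definition cnt :: "nat list set \<Rightarrow> nat list \<Rightarrow> nat \<Rightarrow> nat set" where
  "cnt T x i = {a. a < 4 \<and> x[i := a] \<in> T}"

lemma cnt_sub: "cnt T x i \<subseteq> {..<4}" by (auto simp: cnt_def)
lemma cnt_fin[simp]: "finite (cnt T x i)" by (rule finite_subset[OF cnt_sub]) simp

lemma words_upd: "x \<in> words n \<Longrightarrow> a < 4 \<Longrightarrow> x[i := a] \<in> words n"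
proof -
  assume h: "x \<in> words n" "a < 4"
  have "set (x[i:=a]) \<subseteq> insert a (set x)" by (rule set_update_subset_insert)
  moreover have "\<forall>b\<in>set x. b < 4" "length x = n" using h(1) unfolding words_def by auto
  ultimately have "\<forall>b\<in>set (x[i:=a]). b < 4" "length (x[i:=a]) = n" using h(2) by auto
  then show ?thesis unfolding words_def by blast
qed

lemma words_nth: "x \<in> words n \<Longrightarrow> i < n \<Longrightarrow> x ! i < 4"
  unfolding words_def by auto

lemma words_app: "u \<in> words m \<Longrightarrow> v \<in> words l \<Longrightarrow> u @ v \<in> words (m + l)"
  unfolding words_def by auto

lemma words_take: "y \<in> words n \<Longrightarrow> m \<le> n \<Longrightarrow> take m y \<in> words m"
  unfolding words_def by (auto dest: in_set_takeD)

lemma words_drop: "y \<in> words n \<Longrightarrow> drop m y \<in> words (n - m)"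
  unfolding words_def by (auto dest: in_set_dropD)

lemma words_rep: "replicate m 0 \<in> words m"
  unfolding words_def by auto

lemma card_line: assumes "i < length x"
  shows "card (T \<inter> line x i) = card (cnt T x i)"
proof -
  have eq: "T \<inter> line x i = (\<lambda>a. x[i := a]) ` cnt T x i"
    unfolding line_def cnt_def by blast
  have inj: "inj_on (\<lambda>a. x[i := a]) (cnt T x i)"
  proof (rule inj_onI)
    fix a b assume "x[i := a] = x[i := b]"
    then have "x[i := a] ! i = x[i := b] ! i" by simp
    then show "a = b" using assms by simp
  qed
  show ?thesis unfolding eq using card_image[OF inj] .
qed

lemma line_words: "x \<in> words n \<Longrightarrow> i < n \<Longrightarrow> is_line n (line x i)"
  unfolding is_line_def
  apply (rule bexI[where x=x])
   apply (rule exI[where x=i])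
  by auto

lemma len_words: "x \<in> words n \<Longrightarrow> length x = n" by (simp add: words_def)

lemma mds_card: assumes "mds_code n C" "x \<in> words n" "i < n" shows "card (cnt C x i) = 1"
proof -
  have A: "\<forall>L. is_line n L \<longrightarrow> card (C \<inter> L) = 1" using assms(1) unfolding mds_code_def by (rule conjunct2)
  have B: "card (C \<inter> line x i) = 1" using A line_words[OF assms(2,3)] by blast
  have "i < length x" using len_words[OF assms(2)] assms(3) by simp
  from card_line[OF this, of C] B show ?thesis by linarith
qed

lemma dmds_card: assumes "double_mds n C" "x \<in> words n" "i < n" shows "card (cnt C x i) = 2"
proof -
  have A: "\<forall>L. is_line n L \<longrightarrow> card (C \<inter> L) = 2" using assms(1) unfolding double_mds_def by (rule conjunct2)
  have B: "card (C \<inter> line x i) = 2" using A line_words[OF assms(2,3)] by blast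
  have "i < length x" using len_words[OF assms(2)] assms(3) by simp
  from card_line[OF this, of C] B show ?thesis by linarith
qed

lemma mds_intro: assumes "C \<subseteq> words n" "\<And>x i. x \<in> words n \<Longrightarrow> i < n \<Longrightarrow> card (cnt C x i) = 1"
  shows "mds_code n C"
  unfolding mds_code_def is_line_def
proof (intro conjI allI impI)
  fix L assume "\<exists>x\<in>words n. \<exists>i<n. L = line x i"
  then obtain x i where "x \<in> words n" "i < n" "L = line x i" by blast
  moreover have "i < length x" using len_words[OF \<open>x \<in> words n\<close>] \<open>i < n\<close> by simp
  ultimately show "card (C \<inter> L) = 1" using assms(2)[OF \<open>x \<in> words n\<close> \<open>i < n\<close>] card_line[of i x C] by (simp only:)
qed (use assms in auto)

lemma dc_intro: assumes "C \<subseteq> words n" "\<And>x i. x \<in> words n \<Longrightarrow> i < n \<Longrightarrow> card (cnt C x i) = 0 \<or> card (cnt C x i) = 2"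
  shows "double_code n C"
  unfolding double_code_def is_line_def
proof (intro conjI allI impI)
  fix L assume "\<exists>x\<in>words n. \<exists>i<n. L = line x i"
  then obtain x i where "x \<in> words n" "i < n" "L = line x i" by blast
  moreover have "i < length x" using len_words[OF \<open>x \<in> words n\<close>] \<open>i < n\<close> by simp
  ultimately show "card (C \<inter> L) = 0 \<or> card (C \<inter> L) = 2" using assms(2)[OF \<open>x \<in> words n\<close> \<open>i < n\<close>] card_line[of i x C] by (simp only:)
qed (use assms in auto)

lemma card1_uniq: assumes "card (cnt T x i) = 1" "a < 4" "x[i:=a] \<in> T" "b < 4" "x[i:=b] \<in> T" shows "a = b"
proof -
  obtain c where "cnt T x i = {c}" using card_1_singleton_iff[THEN iffD1, OF assms(1)[unfolded One_nat_def]] by (elim exE)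
  moreover have "a \<in> cnt T x i" "b \<in> cnt T x i" using assms by (auto simp: cnt_def)
  ultimately show ?thesis by auto
qed

lemma card1_ex: assumes "card (cnt T x i) = 1" shows "\<exists>a<4. x[i:=a] \<in> T"
proof -
  obtain c where "cnt T x i = {c}" using card_1_singleton_iff[THEN iffD1, OF assms(1)[unfolded One_nat_def]] by (elim exE)
  then have "c \<in> cnt T x i" by auto
  then show ?thesis by (auto simp: cnt_def)
qed

lemma card2_ex: assumes "card (cnt T x i) = 2" shows "\<exists>a<4. x[i:=a] \<in> T"
proof -
  have "cnt T x i \<noteq> {}" using assms by (metis card.empty zero_neq_numeral)
  then show ?thesis by (auto simp: cnt_def)
qed

lemma card2_three: "card (cnt T x i) = 2 \<Longrightarrow> a \<in> cnt T x i \<Longrightarrow> b \<in> cnt T x i \<Longrightarrow> c \<in> cnt T x i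
   \<Longrightarrow> a \<noteq> b \<Longrightarrow> c = a \<or> c = b"
proof (rule ccontr)
  assume h: "card (cnt T x i) = 2" "a \<in> cnt T x i" "b \<in> cnt T x i" "c \<in> cnt T x i" "a \<noteq> b" "\<not> (c = a \<or> c = b)"
  then have "card {a,b,c} \<le> card (cnt T x i)" by (intro card_mono) auto
  moreover have "card {a,b,c} = 3" using h(5,6) by simp
  ultimately show False using h(1) by linarith
qed

lemma bij4: "(\<And>a. a < 4 \<Longrightarrow> f a < (4::nat)) \<Longrightarrow> (\<And>a b. a < 4 \<Longrightarrow> b < 4 \<Longrightarrow> f a = f b \<Longrightarrow> a = b)
   \<Longrightarrow> bij_betw f {..<4::nat} {..<4}"
proof -
  assume h1: "\<And>a. a < 4 \<Longrightarrow> f a < (4::nat)" and h2: "\<And>a b. a < 4 \<Longrightarrow> b < 4 \<Longrightarrow> f a = f b \<Longrightarrow> a = b"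
  have inj: "inj_on f {..<4}" using h2 by (auto intro: inj_onI)
  have "f ` {..<4} = {..<4}"
  proof (rule card_subset_eq)
    show "f ` {..<4} \<subseteq> {..<4}" using h1 by auto
    show "card (f ` {..<4}) = card {..<4::nat}" using inj card_image by blast
  qed auto
  with inj show ?thesis by (simp add: bij_betw_def)
qed



definition adj :: "nat \<Rightarrow> nat list set \<Rightarrow> (nat list \<times> nat list) set" where
  "adj m Q = {(u, u[i:=b]) | u i b. u \<in> Q \<and> i < m \<and> b < 4 \<and> u[i:=b] \<in> Q}"

lemma adj_step: "u \<in> Q \<Longrightarrow> i < m \<Longrightarrow> b < 4 \<Longrightarrow> u[i:=b] \<in> Q \<Longrightarrow> (u, u[i:=b]) \<in> adj m Q"
  unfolding adj_def by blast

lemma adj_D: "(u, w) \<in> adj m Q \<Longrightarrow> \<exists>i b. u \<in> Q \<and> i < m \<and> b < 4 \<and> w = u[i:=b] \<and> w \<in> Q"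
  unfolding adj_def by blast

lemma adj_rt_sub: "(u0, u) \<in> (adj m Q)\<^sup>* \<Longrightarrow> u0 \<in> Q \<Longrightarrow> u \<in> Q"
  by (induction rule: rtrancl_induct) (auto dest: adj_D)

lemma dmds_sub: "double_mds m A \<Longrightarrow> A \<subseteq> words m"
  unfolding double_mds_def by (rule conjunct1)

lemma mds_sub: "mds_code m A \<Longrightarrow> A \<subseteq> words m"
  unfolding mds_code_def by (rule conjunct1)

lemma conn_prime:
  assumes A: "double_mds m A" and Ap: "prime_dc m A" and u0: "u0 \<in> A" and u: "u \<in> A"
  shows "(u0, u) \<in> (adj m A)\<^sup>*"
proof (rule ccontr)
  assume nu: "(u0, u) \<notin> (adj m A)\<^sup>*"
  define X where "X = {w. (u0, w) \<in> (adj m A)\<^sup>*}"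
  define Y where "Y = A - X"
  have Xsub: "X \<subseteq> A" unfolding X_def using adj_rt_sub u0 by blast
  have clos: "w[i:=b] \<in> X" if "w \<in> X" "i < m" "b < 4" "w[i:=b] \<in> A" for w i b
  proof -
    have "(w, w[i:=b]) \<in> adj m A" using that Xsub by (intro adj_step) auto
    then show ?thesis using that(1) unfolding X_def by (simp add: rtrancl_into_rtrancl)
  qed
  have Asub: "A \<subseteq> words m" using A by (rule dmds_sub)
  have dcX: "double_code m X"
  proof (rule dc_intro)
    show "X \<subseteq> words m" using Xsub Asub by simp
  next
    fix x i assume x: "x \<in> words m" and i: "i < m"
    show "card (cnt X x i) = 0 \<or> card (cnt X x i) = 2"
    proof (cases "\<exists>a0<4. x[i:=a0] \<in> X")
      case True
      then obtain a0 where a0: "a0 < 4" "x[i:=a0] \<in> X" by blast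
      have "cnt X x i = cnt A x i"
      proof
        show "cnt X x i \<subseteq> cnt A x i" using Xsub unfolding cnt_def by blast
        show "cnt A x i \<subseteq> cnt X x i"
        proof
          fix a assume "a \<in> cnt A x i"
          then have a: "a < 4" "x[i:=a] \<in> A" unfolding cnt_def by auto
          have "(x[i:=a0])[i:=a] \<in> X" using clos[OF a0(2) i a(1)] a(2) by simp
          then show "a \<in> cnt X x i" using a unfolding cnt_def by simp
        qed
      qed
      then show ?thesis using dmds_card[OF A x i] by simp
    next
      case False
      then have "cnt X x i = {}" unfolding cnt_def by auto
      then show ?thesis by simp
    qed
  qed
  have dcY: "double_code m Y"
  proof (rule dc_intro)
    show "Y \<subseteq> words m" using Asub unfolding Y_def by blast
  next
    fix x i assume x: "x \<in> words m" and i: "i < m"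
    show "card (cnt Y x i) = 0 \<or> card (cnt Y x i) = 2"
    proof (cases "\<exists>a0<4. x[i:=a0] \<in> Y")
      case True
      then obtain a0 where a0: "a0 < 4" "x[i:=a0] \<in> Y" by blast
      have "cnt Y x i = cnt A x i"
      proof
        show "cnt Y x i \<subseteq> cnt A x i" unfolding cnt_def Y_def by blast
        show "cnt A x i \<subseteq> cnt Y x i"
        proof
          fix a assume "a \<in> cnt A x i"
          then have a: "a < 4" "x[i:=a] \<in> A" unfolding cnt_def by auto
          have "x[i:=a] \<notin> X"
          proof
            assume "x[i:=a] \<in> X"
            moreover have "(x[i:=a])[i:=a0] \<in> A" using a0(2) unfolding Y_def by simp
            ultimately have "(x[i:=a])[i:=a0] \<in> X" using clos[OF _ i a0(1)] by blast
            then show False using a0(2) unfolding Y_def by simp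
          qed
          then show "a \<in> cnt Y x i" using a unfolding cnt_def Y_def by simp
        qed
      qed
      then show ?thesis using dmds_card[OF A x i] by simp
    next
      case False
      then have "cnt Y x i = {}" unfolding cnt_def by auto
      then show ?thesis by simp
    qed
  qed
  have u0X: "u0 \<in> X" unfolding X_def by simp
  have uY: "u \<in> Y" unfolding Y_def X_def using u nu by simp
  have XY: "X \<noteq> Y" using u0X unfolding Y_def by blast
  have "\<exists>P. finite P \<and> card P \<ge> 2 \<and> \<Union>P = A \<and>
          (\<forall>B\<in>P. B \<noteq> {} \<and> double_code m B) \<and>
          (\<forall>B\<in>P. \<forall>B'\<in>P. B \<noteq> B' \<longrightarrow> B \<inter> B' = {})"
  proof (intro exI[of _ "{X, Y}"] conjI)
    show "finite {X, Y}" by simp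
    show "card {X, Y} \<ge> 2" using XY by simp
    show "\<Union>{X, Y} = A" using Xsub unfolding Y_def by blast
    show "\<forall>B\<in>{X, Y}. B \<noteq> {} \<and> double_code m B" using dcX dcY u0X uY by blast
    show "\<forall>B\<in>{X, Y}. \<forall>B'\<in>{X, Y}. B \<noteq> B' \<longrightarrow> B \<inter> B' = {}" unfolding Y_def by blast
  qed
  then show False using Ap unfolding prime_dc_def by blast
qed

lemma cnt_compl: assumes A: "double_mds m A" and x: "x \<in> words m" and i: "i < m"
  shows "card (cnt (words m - A) x i) = 2"
proof -
  have "cnt (words m - A) x i = {..<4} - cnt A x i"
    unfolding cnt_def using words_upd[OF x] by auto
  moreover have "card ({..<4::nat} - cnt A x i) = 4 - card (cnt A x i)"
    using cnt_sub by (subst card_Diff_subset) auto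
  ultimately show ?thesis using dmds_card[OF A x i] by simp
qed

lemma conn_compl:
  assumes A: "double_mds m A" and conn: "\<forall>a0\<in>A. \<forall>a\<in>A. (a0, a) \<in> (adj m A)\<^sup>*"
    and m: "0 < m" and y0: "y0 \<in> words m - A" and y: "y \<in> words m - A"
  shows "(y0, y) \<in> (adj m (words m - A))\<^sup>*"
proof -
  define N where "N = words m - A"
  define X where "X = {w. (y0, w) \<in> (adj m N)\<^sup>*}"
  have Asub: "A \<subseteq> words m" using A by (rule dmds_sub)
  have Xsub: "X \<subseteq> N" unfolding X_def using adj_rt_sub y0 unfolding N_def by blast
  have clos: "w[i:=b] \<in> X" if "w \<in> X" "i < m" "b < 4" "w[i:=b] \<in> N" for w i b
  proof -
    have "(w, w[i:=b]) \<in> adj m N" using that Xsub by (intro adj_step) auto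
    then show ?thesis using that(1) unfolding X_def by (simp add: rtrancl_into_rtrancl)
  qed
  define M where "M a \<longleftrightarrow> (\<exists>b<4. a[0:=b] \<in> X)" for a
  have step_lemma: "M (a[i:=c])" if a: "a \<in> A" "i < m" "c < 4" "a[i:=c] \<in> A" "M a" for a i c
  proof (cases "i = 0")
    case True
    then show ?thesis using a(5) unfolding M_def by simp
  next
    case False
    obtain b0 where b0: "b0 < 4" "a[0:=b0] \<in> X" using a(5) unfolding M_def by blast
    have aw: "a \<in> words m" using a(1) Asub by blast
    have acw: "a[i:=c] \<in> words m" using a(4) Asub by blast
    define N1 where "N1 = cnt N a 0"
    define N2 where "N2 = cnt N (a[i:=c]) 0"
    have c1: "card N1 = 2" unfolding N1_def N_def using cnt_compl[OF A aw m] .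
    have c2: "card N2 = 2" unfolding N2_def N_def using cnt_compl[OF A acw m] .
    have n1: "a ! 0 \<notin> N1" unfolding N1_def N_def cnt_def using a(1) by simp
    have n2: "a ! 0 \<notin> N2"
    proof -
      have "(a[i:=c]) ! 0 = a ! 0" using False by simp
      then have "(a[i:=c])[0 := a ! 0] = a[i:=c]" by (metis list_update_id)
      then show ?thesis unfolding N2_def N_def cnt_def using a(4) by simp
    qed
    have U: "N1 \<union> N2 \<subseteq> {..<4} - {a ! 0}" using n1 n2 cnt_sub unfolding N1_def N2_def by blast
    have "card (N1 \<union> N2) \<le> card ({..<4::nat} - {a ! 0})" using U by (intro card_mono) auto
    also have "\<dots> \<le> 3" using words_nth[OF aw m] by (simp add: card_Diff_singleton)
    finally have cu: "card (N1 \<union> N2) \<le> 3" .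
    have "card (N1 \<union> N2) + card (N1 \<inter> N2) = card N1 + card N2"
      unfolding N1_def N2_def using card_Un_Int[OF cnt_fin cnt_fin] by simp
    then have "card (N1 \<inter> N2) \<noteq> 0" using c1 c2 cu by linarith
    then obtain b where b: "b \<in> N1" "b \<in> N2" by (metis card.empty disjoint_iff)
    have b4: "b < 4" "a[0:=b] \<in> N" using b(1) unfolding N1_def cnt_def by auto
    have "(a[0:=b0])[0:=b] \<in> X" using clos[OF b0(2) m b4(1)] b4(2) by simp
    then have X1: "a[0:=b] \<in> X" by simp
    have sw: "(a[0:=b])[i:=c] = (a[i:=c])[0:=b]" using False by (simp add: list_update_swap)
    have "(a[i:=c])[0:=b] \<in> N" using b(2) unfolding N2_def cnt_def by simp
    then have "(a[0:=b])[i:=c] \<in> X" using clos[OF X1 a(2) a(3)] sw by simp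
    then show ?thesis unfolding M_def using sw b4(1) by auto
  qed
  have path: "M a" if "(a0, a) \<in> (adj m A)\<^sup>*" "a0 \<in> A" "M a0" for a0 a
    using that
  proof (induction rule: rtrancl_induct)
    case base
    then show ?case by simp
  next
    case (step a a')
    obtain i c where ic: "a \<in> A" "i < m" "c < 4" "a' = a[i:=c]" "a' \<in> A" using adj_D[OF step(2)] by blast
    have "M a" using step.IH[OF step.prems] .
    moreover have "a[i:=c] \<in> A" using ic(4,5) by simp
    ultimately have "M (a[i:=c])" using step_lemma[OF ic(1,2,3)] by blast
    then show ?case using ic(4) by simp
  qed
  have y0w: "y0 \<in> words m" using y0 by simp
  obtain c where c: "c < 4" "y0[0:=c] \<in> A" using card2_ex[OF dmds_card[OF A y0w m]] by blast
  have "(y0[0:=c])[0 := y0 ! 0] \<in> X" unfolding X_def by simp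
  moreover have "y0 ! 0 < 4" using words_nth[OF y0w m] .
  ultimately have Ma0: "M (y0[0:=c])" unfolding M_def by blast
  have yw: "y \<in> words m" using y by simp
  obtain c' where c': "c' < 4" "y[0:=c'] \<in> A" using card2_ex[OF dmds_card[OF A yw m]] by blast
  have "M (y[0:=c'])" using path[OF _ c(2) Ma0] conn c(2) c'(2) by blast
  then obtain b where b: "b < 4" "y[0:=b] \<in> X" unfolding M_def by auto
  have "(y[0:=b])[0 := y ! 0] \<in> X" using clos[OF b(2) m words_nth[OF yw m]] y unfolding N_def by simp
  then have "y \<in> X" by simp
  then show ?thesis unfolding X_def N_def by simp
qed



locale core =
  fixes n m :: nat and C A :: "nat list set"
  assumes C: "mds_code n C" and A: "double_mds m A" and Ap: "prime_dc m A"
    and m1: "0 < m" and l1: "m < n"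
    and H: "\<And>y y'. y \<in> C \<Longrightarrow> y' \<in> C \<Longrightarrow> drop m y = drop m y' \<Longrightarrow> (take m y \<in> A \<longleftrightarrow> take m y' \<in> A)"
begin

definition V where "V u = {v \<in> words (n-m). u @ v \<in> C}"

lemma Csub: "C \<subseteq> words n" using C by (rule mds_sub)

lemma uvw: "u \<in> words m \<Longrightarrow> v \<in> words (n-m) \<Longrightarrow> u @ v \<in> words n"
  using words_app[of u m v "n-m"] l1 by simp

lemma upd1: "u \<in> words m \<Longrightarrow> i < m \<Longrightarrow> (u@v)[i:=a] = u[i:=a] @ v"
  by (simp add: list_update_append len_words)

lemma upd2: "u \<in> words m \<Longrightarrow> (u@v)[m+i:=a] = u @ v[i:=a]"
  by (simp add: list_update_append len_words)

lemma V_mds: assumes u: "u \<in> words m" shows "mds_code (n-m) (V u)"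
proof (rule mds_intro)
  show "V u \<subseteq> words (n-m)" unfolding V_def by blast
next
  fix v i assume v: "v \<in> words (n-m)" and i: "i < n-m"
  have "cnt (V u) v i = cnt C (u@v) (m+i)"
    unfolding cnt_def V_def using upd2[OF u] words_upd[OF v] by auto
  moreover have "m + i < n" using i by simp
  ultimately show "card (cnt (V u) v i) = 1" using mds_card[OF C uvw[OF u v]] by simp
qed

lemma col_mem: "u \<in> words m \<Longrightarrow> v \<in> words (n-m) \<Longrightarrow> i < m \<Longrightarrow> ((u@v)[i:=a] \<in> C) = (v \<in> V (u[i:=a]))"
  unfolding V_def using upd1 by simp

lemma col_uniq: assumes u: "u \<in> words m" and v: "v \<in> words (n-m)" and i: "i < m"
  and a: "a < 4" and b: "b < 4" and va: "v \<in> V (u[i:=a])" and vb: "v \<in> V (u[i:=b])"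
  shows "a = b"
proof -
  have "card (cnt C (u@v) i) = 1" using mds_card[OF C uvw[OF u v]] i l1 by simp
  then show ?thesis using card1_uniq[of C "u@v" i a b] a b va vb col_mem[OF u v i] by simp
qed

lemma col_ex: assumes u: "u \<in> words m" and v: "v \<in> words (n-m)" and i: "i < m"
  shows "\<exists>a<4. v \<in> V (u[i:=a])"
proof -
  have "card (cnt C (u@v) i) = 1" using mds_card[OF C uvw[OF u v]] i l1 by simp
  then show ?thesis using card1_ex[of C "u@v" i] col_mem[OF u v i] by simp
qed

lemma V_ne: assumes u: "u \<in> words m" shows "\<exists>v. v \<in> V u"
proof -
  have "card (cnt (V u) (replicate (n-m) 0) 0) = 1"
    using mds_card[OF V_mds[OF u] words_rep] l1 by simp
  then show ?thesis using card1_ex by blast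
qed

lemma flip:
  assumes Q2: "\<And>x i. x \<in> words m \<Longrightarrow> i < m \<Longrightarrow> card (cnt Q x i) = 2" and Qs: "Q \<subseteq> words m"
    and cons: "\<And>u v. u \<in> words m \<Longrightarrow> v \<in> V u \<Longrightarrow> (u \<in> Q \<longleftrightarrow> v \<in> W)" and Ws: "W \<subseteq> words (n-m)"
    and u: "u \<in> Q" "i < m" "b < 4" "b \<noteq> u ! i" "u[i:=b] \<in> Q"
  shows "V (u[i:=b]) = W - V u"
proof
  have uw: "u \<in> words m" using u(1) Qs by blast
  show "V (u[i:=b]) \<subseteq> W - V u"
  proof
    fix v assume v: "v \<in> V (u[i:=b])"
    have vw: "v \<in> words (n-m)" using v unfolding V_def by blast
    have "v \<in> W" using cons[OF words_upd[OF uw u(3)] v] u(5) by simp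
    moreover have "v \<notin> V u"
    proof
      assume "v \<in> V u"
      then have "v \<in> V (u[i:=u!i])" by simp
      from col_uniq[OF uw vw u(2) words_nth[OF uw u(2)] u(3) this v] u(4) show False by simp
    qed
    ultimately show "v \<in> W - V u" by simp
  qed
  show "W - V u \<subseteq> V (u[i:=b])"
  proof
    fix v assume v: "v \<in> W - V u"
    have vw: "v \<in> words (n-m)" using v Ws by blast
    obtain a where a: "a < 4" "v \<in> V (u[i:=a])" using col_ex[OF uw vw u(2)] by blast
    have aQ: "u[i:=a] \<in> Q" using cons[OF words_upd[OF uw a(1)] a(2)] v by simp
    have m1: "u ! i \<in> cnt Q u i" using u(1) words_nth[OF uw u(2)] unfolding cnt_def by simp
    have m2: "b \<in> cnt Q u i" using u(3,5) unfolding cnt_def by simp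
    have m3: "a \<in> cnt Q u i" using a(1) aQ unfolding cnt_def by simp
    have "a \<noteq> u ! i"
    proof
      assume "a = u ! i"
      then have "v \<in> V u" using a(2) by simp
      then show False using v by simp
    qed
    then have "a = b" using card2_three[OF Q2[OF uw u(2)] m1 m2 m3] u(4) by auto
    then show "v \<in> V (u[i:=b])" using a(2) by simp
  qed
qed

lemma path:
  assumes Q2: "\<And>x i. x \<in> words m \<Longrightarrow> i < m \<Longrightarrow> card (cnt Q x i) = 2" and Qs: "Q \<subseteq> words m"
    and cons: "\<And>u v. u \<in> words m \<Longrightarrow> v \<in> V u \<Longrightarrow> (u \<in> Q \<longleftrightarrow> v \<in> W)" and Ws: "W \<subseteq> words (n-m)"
    and u0: "u0 \<in> Q" and p: "(u0, u) \<in> (adj m Q)\<^sup>*"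
  shows "V u = V u0 \<or> V u = W - V u0"
  using p
proof (induction rule: rtrancl_induct)
  case base
  then show ?case by simp
next
  case (step u u')
  obtain i b where ib: "u \<in> Q" "i < m" "b < 4" "u' = u[i:=b]" "u' \<in> Q" using adj_D[OF step(2)] by blast
  have sub: "V u0 \<subseteq> W"
  proof
    fix v assume "v \<in> V u0"
    then show "v \<in> W" using cons[of u0 v] u0 Qs by blast
  qed
  show ?case
  proof (cases "b = u ! i")
    case True
    then have "u' = u" using ib(4) by simp
    then show ?thesis using step.IH by simp
  next
    case False
    have "V u' = W - V u" using flip[OF Q2 Qs cons Ws ib(1,2,3) False] ib(4,5) by simp
    then show ?thesis using step.IH sub by auto
  qed
qed

definition N where "N = words m - A"
definition W1 where "W1 = {v \<in> words (n-m). \<exists>u\<in>A. v \<in> V u}"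
definition W0 where "W0 = {v \<in> words (n-m). \<exists>u\<in>N. v \<in> V u}"

lemma Asub: "A \<subseteq> words m" using A by (rule dmds_sub)

lemma Hc: assumes u: "u \<in> words m" "v \<in> V u" and u': "u' \<in> words m" "v \<in> V u'"
  shows "u \<in> A \<longleftrightarrow> u' \<in> A"
proof -
  have "u @ v \<in> C" "u' @ v \<in> C" using u u' unfolding V_def by auto
  moreover have "length u = m" "length u' = m" using u u' len_words by auto
  ultimately show ?thesis using H[of "u@v" "u'@v"] by simp
qed

lemma Vw: "v \<in> V u \<Longrightarrow> v \<in> words (n-m)" unfolding V_def by blast

lemma cons1: assumes u: "u \<in> words m" and v: "v \<in> V u" shows "(u \<in> A \<longleftrightarrow> v \<in> W1)"
proof
  assume "u \<in> A" then show "v \<in> W1" unfolding W1_def using v Vw[OF v] by blast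
next
  assume "v \<in> W1"
  then obtain u' where u': "u' \<in> A" "v \<in> V u'" unfolding W1_def by blast
  have "u' \<in> words m" using u'(1) Asub by blast
  then show "u \<in> A" using Hc[OF u v _ u'(2)] u'(1) by blast
qed

lemma cons0: assumes u: "u \<in> words m" and v: "v \<in> V u" shows "(u \<in> N \<longleftrightarrow> v \<in> W0)"
proof
  assume "u \<in> N" then show "v \<in> W0" unfolding W0_def using v Vw[OF v] by blast
next
  assume "v \<in> W0"
  then obtain u' where u': "u' \<in> N" "v \<in> V u'" unfolding W0_def by blast
  have "u' \<in> words m" "u' \<notin> A" using u'(1) unfolding N_def by auto
  then have "u \<notin> A" using Hc[OF u v _ u'(2)] by blast
  then show "u \<in> N" using u unfolding N_def by blast
qed

lemma N2: "x \<in> words m \<Longrightarrow> i < m \<Longrightarrow> card (cnt N x i) = 2"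
  unfolding N_def using cnt_compl[OF A] by blast

lemma A2: "x \<in> words m \<Longrightarrow> i < m \<Longrightarrow> card (cnt A x i) = 2"
  using dmds_card[OF A] by blast

lemma Nsub: "N \<subseteq> words m" unfolding N_def by blast
lemma W1sub: "W1 \<subseteq> words (n-m)" unfolding W1_def by blast
lemma W0sub: "W0 \<subseteq> words (n-m)" unfolding W0_def by blast

lemma connA: "\<forall>a0\<in>A. \<forall>a\<in>A. (a0, a) \<in> (adj m A)\<^sup>*"
  using conn_prime[OF A Ap] by blast

lemma connN: "y0 \<in> N \<Longrightarrow> y \<in> N \<Longrightarrow> (y0, y) \<in> (adj m N)\<^sup>*"
  unfolding N_def using conn_compl[OF A connA m1] by blast

lemma main: "\<exists>g1 g2. quasigroup m g1 \<and> quasigroup (n-m) g2 \<and>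
   C = {y \<in> words n. g1 (take m y) = g2 (drop m y)}"
proof -
  define z where "z = (replicate m 0 :: nat list)"
  have zw: "z \<in> words m" unfolding z_def by (rule words_rep)
  obtain ca where ca: "ca < 4" "z[0:=ca] \<in> A" using card2_ex[OF A2[OF zw m1]] by blast
  obtain cn where cn: "cn < 4" "z[0:=cn] \<in> N" using card2_ex[OF N2[OF zw m1]] by blast
  define uA where "uA = z[0:=ca]"
  define uN where "uN = z[0:=cn]"
  define P where "P = V uA"
  define Qv where "Qv = V uN"
  have VA: "V u = P \<or> V u = W1 - P" if "u \<in> A" for u
    unfolding P_def using path[OF A2 Asub cons1 W1sub _ ] connA ca(2) that uA_def by blast
  have VN: "V u = Qv \<or> V u = W0 - Qv" if "u \<in> N" for u
    unfolding Qv_def using path[OF N2 Nsub cons0 W0sub _ connN] cn(2) that uN_def by blast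
  have PW: "P \<subseteq> W1" unfolding P_def using cons1 ca(2) Asub uA_def by blast
  have QW: "Qv \<subseteq> W0" unfolding Qv_def using cons0 cn(2) Nsub uN_def by blast
  have disj: "v \<notin> W0" if "v \<in> W1" for v
  proof
    assume "v \<in> W0"
    then obtain u' where u': "u' \<in> N" "v \<in> V u'" unfolding W0_def by blast
    then have "u' \<in> A" using cons1[of u' v] that Nsub by blast
    then show False using u' unfolding N_def by blast
  qed
  have cover: "v \<in> W1 \<or> v \<in> W0" if vw: "v \<in> words (n-m)" for v
  proof -
    obtain a where a: "a < 4" "v \<in> V (z[0:=a])" using col_ex[OF zw vw m1] by blast
    have "z[0:=a] \<in> words m" using words_upd[OF zw a(1)] .
    then show ?thesis using a vw unfolding W1_def W0_def N_def by blast
  qed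
  define g1 where "g1 u = (if u \<in> A then (if V u = P then 0 else 1) else (if V u = Qv then 2 else 3::nat))" for u
  define g2 where "g2 v = (if v \<in> W1 then (if v \<in> P then 0 else 1) else (if v \<in> Qv then 2 else 3::nat))" for v
  have key: "v \<in> V u \<longleftrightarrow> g1 u = g2 v" if u: "u \<in> words m" and v: "v \<in> words (n-m)" for u v
  proof (cases "u \<in> A")
    case True
    show ?thesis
    proof (cases "V u = P")
      case True
      then show ?thesis using \<open>u \<in> A\<close> PW unfolding g1_def g2_def by auto
    next
      case False
      then have "V u = W1 - P" using VA[OF \<open>u \<in> A\<close>] by simp
      then show ?thesis using \<open>u \<in> A\<close> False unfolding g1_def g2_def by auto
    qed
  next
    case False
    then have uN: "u \<in> N" unfolding N_def using u by simp
    show ?thesis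
    proof (cases "V u = Qv")
      case True
      then show ?thesis using False QW disj unfolding g1_def g2_def by auto
    next
      case F2: False
      then have "V u = W0 - Qv" using VN[OF uN] by simp
      then show ?thesis using False F2 disj cover[OF v] unfolding g1_def g2_def by auto
    qed
  qed
  have Ceq: "C = {y \<in> words n. g1 (take m y) = g2 (drop m y)}"
  proof (intro set_eqI iffI)
    fix y assume y: "y \<in> C"
    have yw: "y \<in> words n" using y Csub by blast
    have tw: "take m y \<in> words m" using words_take[OF yw] l1 by simp
    have dw: "drop m y \<in> words (n-m)" using words_drop[OF yw] .
    have "drop m y \<in> V (take m y)" unfolding V_def using y dw by simp
    then show "y \<in> {y \<in> words n. g1 (take m y) = g2 (drop m y)}" using key[OF tw dw] yw by simp
  next
    fix y assume y: "y \<in> {y \<in> words n. g1 (take m y) = g2 (drop m y)}"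
    have yw: "y \<in> words n" using y by simp
    have tw: "take m y \<in> words m" using words_take[OF yw] l1 by simp
    have dw: "drop m y \<in> words (n-m)" using words_drop[OF yw] .
    have "drop m y \<in> V (take m y)" using key[OF tw dw] y by simp
    then show "y \<in> C" unfolding V_def by simp
  qed
  have g1lt: "g1 u < 4" for u unfolding g1_def by auto
  have g2lt: "g2 v < 4" for v unfolding g2_def by auto
  have q1inj: "a = b" if u: "u \<in> words m" and i: "i < m" and ab: "a < 4" "b < 4" "g1 (u[i:=a]) = g1 (u[i:=b])" for u i a b
  proof -
    have uaw: "u[i:=a] \<in> words m" using words_upd[OF u ab(1)] .
    have ubw: "u[i:=b] \<in> words m" using words_upd[OF u ab(2)] .
    obtain v where v: "v \<in> V (u[i:=a])" using V_ne[OF uaw] by blast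
    have vw: "v \<in> words (n-m)" using v unfolding V_def by blast
    have "g1 (u[i:=a]) = g2 v" using key[OF uaw vw] v by simp
    then have "v \<in> V (u[i:=b])" using key[OF ubw vw] ab(3) by simp
    then show ?thesis using col_uniq[OF u vw i ab(1,2) v] by simp
  qed
  have qg1: "quasigroup m g1"
    unfolding quasigroup_def using g1lt q1inj by (auto intro!: bij4)
  have surj1: "\<exists>u\<in>words m. g1 u = t" if t: "t < 4" for t
  proof -
    have "bij_betw (\<lambda>a. g1 (z[0:=a])) {..<4} {..<4}" using qg1 zw m1 unfolding quasigroup_def by blast
    then have "(\<lambda>a. g1 (z[0:=a])) ` {..<4} = {..<4}" by (simp add: bij_betw_def)
    then obtain a where "a < 4" "g1 (z[0:=a]) = t" using t by (metis imageE lessThan_iff)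
    then show ?thesis using words_upd[OF zw] by blast
  qed
  have q2inj: "a = b" if v: "v \<in> words (n-m)" and i: "i < n-m" and ab: "a < 4" "b < 4" "g2 (v[i:=a]) = g2 (v[i:=b])" for v i a b
  proof -
    obtain u where u: "u \<in> words m" "g1 u = g2 (v[i:=a])" using surj1[OF g2lt] by blast
    have vaw: "v[i:=a] \<in> words (n-m)" using words_upd[OF v ab(1)] .
    have vbw: "v[i:=b] \<in> words (n-m)" using words_upd[OF v ab(2)] .
    have "v[i:=a] \<in> V u" using key[OF u(1) vaw] u(2) by simp
    moreover have "v[i:=b] \<in> V u" using key[OF u(1) vbw] u(2) ab(3) by simp
    ultimately show ?thesis using card1_uniq[OF mds_card[OF V_mds[OF u(1)] v i] ab(1) _ ab(2)] by blast
  qed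
  have qg2: "quasigroup (n-m) g2"
    unfolding quasigroup_def using g2lt q2inj by (auto intro!: bij4)
  show ?thesis using qg1 qg2 Ceq by blast
qed

end



definition pw :: "(nat \<Rightarrow> nat) \<Rightarrow> nat \<Rightarrow> nat list \<Rightarrow> nat list" where
  "pw s n x = map (\<lambda>i. x ! s i) [0..<n]"

lemma pw_len[simp]: "length (pw s n x) = n" unfolding pw_def by simp
lemma pw_nth[simp]: "i < n \<Longrightarrow> pw s n x ! i = x ! s i" unfolding pw_def by simp

lemma pw_words: assumes s: "\<forall>i<n. s i < n" and x: "x \<in> words n" shows "pw s n x \<in> words n"
proof -
  have "\<forall>b\<in>set (pw s n x). b < 4"
  proof
    fix b assume "b \<in> set (pw s n x)"
    then obtain i where "i < n" "b = x ! s i" unfolding pw_def by auto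
    then show "b < 4" using words_nth[OF x] s by auto
  qed
  then show ?thesis unfolding words_def by simp
qed

lemma pw_inv: assumes "\<forall>i<n. s i < n \<and> t (s i) = i" and "length y = n"
  shows "pw s n (pw t n y) = y"
  by (rule nth_equalityI) (use assms in auto)

lemma pw_upd: assumes t: "\<forall>i<n. t i < n" and tj: "\<forall>i<n. (t i = j) = (i = s j)" and "length y = n"
  shows "pw t n (y[j:=a]) = (pw t n y)[s j := a]"
  by (rule nth_equalityI) (use assms in \<open>auto simp: nth_list_update\<close>)

lemma map_nth_upt: "map f xs = map (\<lambda>i. f (xs ! i)) [0..<length xs]"
  by (rule nth_equalityI) auto

lemma rw_cong: assumes "finite K" "\<forall>i\<in>K. x ! i = x' ! i"
  shows "restrict_word x K = restrict_word x' K"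
  unfolding restrict_word_def using assms by (auto intro: map_cong)

lemma perm_decomp:
  assumes C: "mds_code n C" and A: "double_mds m A" and Ap: "prime_dc m A"
    and K: "K \<subseteq> {..<n}" and mK: "card K = m" and m2: "2 \<le> m" and l2: "2 \<le> n - m"
    and HC: "\<And>x x'. x \<in> C \<Longrightarrow> x' \<in> C \<Longrightarrow> (\<forall>i<n. i \<notin> K \<longrightarrow> x ! i = x' ! i) \<Longrightarrow>
             (restrict_word x K \<in> A \<longleftrightarrow> restrict_word x' K \<in> A)"
  shows "decomposable n C"
proof -
  define sK where "sK = sorted_list_of_set K"
  define sL where "sL = sorted_list_of_set ({..<n} - K)"
  define ps where "ps = sK @ sL"
  define s where "s i = ps ! i" for i
  have fK: "finite K" using K finite_subset by blast
  have ssK: "set sK = K" unfolding sK_def using fK by simp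
  have ssL: "set sL = {..<n} - K" unfolding sL_def by simp
  have dK: "distinct sK" "distinct sL" unfolding sK_def sL_def by simp_all
  have dps: "distinct ps" unfolding ps_def using dK ssK ssL by auto
  have sps: "set ps = {..<n}" unfolding ps_def using ssK ssL K by auto
  have lK: "length sK = m" unfolding sK_def using mK by simp
  have lps: "length ps = n"
    using distinct_card[OF dps] sps by simp
  have bij: "bij_betw s {..<n} {..<n}"
  proof -
    have "bij_betw ((!) ps) {..<length ps} (set ps)" by (rule bij_betw_nth[OF dps refl refl])
    then show ?thesis unfolding s_def using lps sps by simp
  qed
  define t where "t = inv_into {..<n} s"
  have s_lt: "\<forall>i<n. s i < n" using bij bij_betwE by blast
  have t_lt: "\<forall>i<n. t i < n" unfolding t_def
    using bij by (metis bij_betw_def inv_into_into lessThan_iff)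
  have ts: "\<forall>i<n. t (s i) = i" unfolding t_def
    using bij by (metis bij_betw_inv_into_left lessThan_iff)
  have st: "\<forall>i<n. s (t i) = i" unfolding t_def
    using bij by (metis bij_betw_inv_into_right lessThan_iff)
  have Csub: "C \<subseteq> words n" using C by (rule mds_sub)
  define C' where "C' = {y \<in> words n. pw t n y \<in> C}"
  have tj: "\<forall>i<n. (t i = j) = (i = s j)" if "j < n" for j
    using ts st s_lt that by metis
  have C': "mds_code n C'"
  proof (rule mds_intro)
    show "C' \<subseteq> words n" unfolding C'_def by blast
  next
    fix y j assume y: "y \<in> words n" and j: "j < n"
    have ly: "length y = n" using y by (rule len_words)
    have "cnt C' y j = cnt C (pw t n y) (s j)"
      unfolding cnt_def C'_def using pw_upd[of n t j s y, OF t_lt tj[OF j] ly] words_upd[OF y] by auto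
    then show "card (cnt C' y j) = 1"
      using mds_card[OF C pw_words[OF t_lt y]] s_lt j by simp
  qed
  have Ceq: "C = {x \<in> words n. pw s n x \<in> C'}"
  proof (intro set_eqI iffI)
    fix x assume x: "x \<in> C"
    have xw: "x \<in> words n" using x Csub by blast
    have "pw t n (pw s n x) = x" using pw_inv[of n t s x] st t_lt len_words[OF xw] by simp
    then show "x \<in> {x \<in> words n. pw s n x \<in> C'}" using x xw pw_words[OF s_lt xw] unfolding C'_def by simp
  next
    fix x assume x: "x \<in> {x \<in> words n. pw s n x \<in> C'}"
    then have xw: "x \<in> words n" by simp
    have "pw t n (pw s n x) = x" using pw_inv[of n t s x] st t_lt len_words[OF xw] by simp
    then show "x \<in> C" using x unfolding C'_def by simp
  qed
  have tk: "take m (pw s n x) = restrict_word x K" for x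
  proof -
    have "take m (pw s n x) = map (\<lambda>i. x ! s i) [0..<m]"
      unfolding pw_def using m2 l2 by (simp add: take_map)
    also have "\<dots> = map (\<lambda>i. x ! (sK ! i)) [0..<m]"
      unfolding s_def ps_def using lK by (auto simp: nth_append)
    also have "\<dots> = restrict_word x K"
      unfolding restrict_word_def sK_def[symmetric] using map_nth_upt[of "\<lambda>i. x ! i" sK] lK by simp
    finally show ?thesis .
  qed
  have dk: "drop m (pw s n x) = map (\<lambda>i. x ! s i) [m..<n]" for x
    unfolding pw_def by (simp add: drop_map)
  have tk2: "take m (pw s n x) = map (\<lambda>i. x ! s i) [0..<m]" for x
    unfolding pw_def using m2 l2 by (simp add: take_map)
  have H: "take m y \<in> A \<longleftrightarrow> take m y' \<in> A"
    if y: "y \<in> C'" and y': "y' \<in> C'" and d: "drop m y = drop m y'" for y y'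
  proof -
    define x where "x = pw t n y"
    define x' where "x' = pw t n y'"
    have yw: "y \<in> words n" "y' \<in> words n" using y y' unfolding C'_def by auto
    have xC: "x \<in> C" "x' \<in> C" using y y' unfolding C'_def x_def x'_def by auto
    have yx: "y = pw s n x" "y' = pw s n x'"
      unfolding x_def x'_def using pw_inv[of n s t] s_lt ts len_words yw by auto
    have agree: "\<forall>i<n. i \<notin> K \<longrightarrow> x ! i = x' ! i"
    proof (intro allI impI)
      fix i assume i: "i < n" "i \<notin> K"
      have "m \<le> t i"
      proof (rule ccontr)
        assume "\<not> m \<le> t i"
        then have "s (t i) = sK ! (t i)" unfolding s_def ps_def using lK by (simp add: nth_append)
        then have "i \<in> set sK" using st i(1) lK \<open>\<not> m \<le> t i\<close> by (metis not_le nth_mem)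
        then show False using i(2) ssK by simp
      qed
      have lm: "m \<le> length y" "m \<le> length y'" using len_words[OF yw(1)] len_words[OF yw(2)] l2 m2 by auto
      have e1: "drop m y ! (t i - m) = y ! (m + (t i - m))" using nth_drop[OF lm(1)] .
      have e2: "drop m y' ! (t i - m) = y' ! (m + (t i - m))" using nth_drop[OF lm(2)] .
      have "m + (t i - m) = t i" using \<open>m \<le> t i\<close> by simp
      then have "y ! t i = y' ! t i" using e1 e2 d by simp
      then show "x ! i = x' ! i" unfolding x_def x'_def using i(1) by simp
    qed
    show ?thesis using HC[OF xC agree] yx tk by simp
  qed
  have lt: "0 < m" "m < n" using m2 l2 by auto
  interpret core n m C' A by (rule core.intro[OF C' A Ap lt(1) lt(2) H])
  obtain g1 g2 where g: "quasigroup m g1" "quasigroup (n-m) g2"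
    "C' = {y \<in> words n. g1 (take m y) = g2 (drop m y)}" using main by blast
  have Cx: "C = {x \<in> words n. g1 (map (\<lambda>i. x ! s i) [0..<m]) = g2 (map (\<lambda>i. x ! s i) [m..<n])}"
  proof (intro set_eqI)
    fix x
    show "x \<in> C \<longleftrightarrow> x \<in> {x \<in> words n. g1 (map (\<lambda>i. x ! s i) [0..<m]) = g2 (map (\<lambda>i. x ! s i) [m..<n])}"
      unfolding Ceq g(3) using pw_words[OF s_lt, of x] tk2[of x] dk[of x] by auto
  qed
  have mm: "m \<le> n - 2" using l2 by simp
  show ?thesis unfolding decomposable_def
    apply (rule exI[of _ m], rule exI[of _ g1], rule exI[of _ g2], rule exI[of _ s])
    using g(1,2) bij m2 mm Cx by blast
qed



lemma rep_facts:
  assumes R: "canonical_rep n S k Ks Ss s0"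
  shows "1 \<le> k" "k \<le> n" "length Ks = k" "length Ss = k"
    "\<And>j. j < k \<Longrightarrow> Ks ! j \<noteq> {}"
    "\<And>j j'. j < k \<Longrightarrow> j' < k \<Longrightarrow> j \<noteq> j' \<Longrightarrow> Ks ! j \<inter> Ks ! j' = {}"
    "(\<Union>j<k. Ks ! j) = {..<n}"
    "\<And>j. j < k \<Longrightarrow> double_mds (card (Ks ! j)) (Ss ! j)"
    "\<And>j. j < k \<Longrightarrow> prime_dc (card (Ks ! j)) (Ss ! j)"
    "\<And>x. x \<in> words n \<Longrightarrow> (x \<in> S) \<longleftrightarrow> (odd (card {j. j < k \<and> restrict_word x (Ks ! j) \<in> Ss ! j}) \<noteq> s0)"
  using R unfolding canonical_rep_def by blast+

lemma Ksub: assumes R: "canonical_rep n S k Ks Ss s0" and j: "j < k" shows "Ks ! j \<subseteq> {..<n}"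
  using rep_facts(7)[OF R] j by blast

lemma Kfin: assumes R: "canonical_rep n S k Ks Ss s0" and j: "j < k" shows "finite (Ks ! j)"
  using Ksub[OF R j] finite_subset by blast

lemma Kpos: assumes R: "canonical_rep n S k Ks Ss s0" and j: "j < k" shows "1 \<le> card (Ks ! j)"
  using Kfin[OF R j] rep_facts(5)[OF R j] by (simp add: Suc_le_eq card_gt_0_iff)

lemma sumn: assumes R: "canonical_rep n S k Ks Ss s0" shows "(\<Sum>j<k. card (Ks ! j)) = n"
proof -
  have "card (\<Union>j<k. Ks ! j) = (\<Sum>j<k. card (Ks ! j))"
    by (rule card_UN_disjoint) (use Kfin[OF R] rep_facts(6)[OF R] in auto)
  then show ?thesis using rep_facts(7)[OF R] by simp
qed

lemma rest: assumes R: "canonical_rep n S k Ks Ss s0" and j0: "j0 < k"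
  shows "card (Ks ! j0) + (k - 1) \<le> n"
proof -
  have "(\<Sum>j<k. card (Ks ! j)) = card (Ks ! j0) + (\<Sum>j\<in>{..<k} - {j0}. card (Ks ! j))"
    using j0 by (simp add: sum.remove)
  moreover have "(\<Sum>j\<in>{..<k} - {j0}. (1::nat)) \<le> (\<Sum>j\<in>{..<k} - {j0}. card (Ks ! j))"
    by (rule sum_mono) (use Kpos[OF R] in auto)
  moreover have "(\<Sum>j\<in>{..<k} - {j0}. (1::nat)) = k - 1" using j0 by simp
  ultimately show ?thesis using sumn[OF R] by linarith
qed

lemma parity:
  assumes R: "canonical_rep n S k Ks Ss s0" and j0: "j0 < k"
    and x: "x \<in> words n" "x \<in> S" and x': "x' \<in> words n" "x' \<in> S"
    and ag: "\<forall>i<n. i \<notin> Ks ! j0 \<longrightarrow> x ! i = x' ! i"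
  shows "restrict_word x (Ks ! j0) \<in> Ss ! j0 \<longleftrightarrow> restrict_word x' (Ks ! j0) \<in> Ss ! j0"
proof -
  define F where "F z = {j. j < k \<and> restrict_word z (Ks ! j) \<in> Ss ! j}" for z
  have J: "F x - {j0} = F x' - {j0}"
  proof -
    have eq: "restrict_word x (Ks ! j) = restrict_word x' (Ks ! j)" if "j < k" "j \<noteq> j0" for j
    proof (rule rw_cong[OF Kfin[OF R that(1)]])
      show "\<forall>i\<in>Ks ! j. x ! i = x' ! i"
      proof
        fix i assume i: "i \<in> Ks ! j"
        have "i < n" using Ksub[OF R that(1)] i by blast
        moreover have "i \<notin> Ks ! j0" using rep_facts(6)[OF R that(1) j0 that(2)] i by blast
        ultimately show "x ! i = x' ! i" using ag by blast
      qed
    qed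
    show ?thesis
    proof (intro set_eqI)
      fix j
      show "j \<in> F x - {j0} \<longleftrightarrow> j \<in> F x' - {j0}"
      proof (cases "j < k \<and> j \<noteq> j0")
        case True
        then show ?thesis unfolding F_def using eq[of j] by simp
      next
        case False
        then show ?thesis unfolding F_def by auto
      qed
    qed
  qed
  have finF: "finite (F z)" for z unfolding F_def by simp
  have cF: "card (F z) = card (F z - {j0}) + (if j0 \<in> F z then 1 else 0)" for z
  proof (cases "j0 \<in> F z")
    case True
    then show ?thesis using card.remove[OF finF True] by simp
  next
    case False
    then show ?thesis by simp
  qed
  have px: "odd (card (F x)) \<noteq> s0" using rep_facts(10)[OF R x(1)] x(2) unfolding F_def by simp
  have px': "odd (card (F x')) \<noteq> s0" using rep_facts(10)[OF R x'(1)] x'(2) unfolding F_def by simp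
  have "j0 \<in> F x \<longleftrightarrow> j0 \<in> F x'"
  proof -
    have "odd (card (F x)) = odd (card (F x'))" using px px' by blast
    then have "odd (card (F x - {j0}) + (if j0 \<in> F x then 1 else 0)) =
               odd (card (F x - {j0}) + (if j0 \<in> F x' then 1 else 0))" using cF[of x] cF[of x'] J by simp
    then show ?thesis by (cases "j0 \<in> F x"; cases "j0 \<in> F x'") auto
  qed
  then show ?thesis unfolding F_def using j0 by simp
qed

lemma part_a:
  assumes R: "canonical_rep n S k Ks Ss s0" and C: "mds_code n C" and CS: "C \<subseteq> S"
    and j0: "j0 < k" and c1: "2 \<le> card (Ks ! j0)" and c2: "2 \<le> n - card (Ks ! j0)"
  shows "decomposable n C"
proof (rule perm_decomp[OF C rep_facts(8)[OF R j0] rep_facts(9)[OF R j0] Ksub[OF R j0] refl c1 c2])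
  fix x x' assume xx: "x \<in> C" "x' \<in> C" and ag: "\<forall>i<n. i \<notin> Ks ! j0 \<longrightarrow> x ! i = x' ! i"
  have Cw: "C \<subseteq> words n" using C by (rule mds_sub)
  show "restrict_word x (Ks ! j0) \<in> Ss ! j0 \<longleftrightarrow> restrict_word x' (Ks ! j0) \<in> Ss ! j0"
    using parity[OF R j0 _ _ _ _ ag] xx Cw CS by blast
qed



lemma part_b:
  assumes R: "canonical_rep n S k Ks Ss s0" and S: "double_mds n S" and C: "mds_code n C" and CS: "C \<subseteq> S"
    and kn: "k = n"
  shows "semilinear n C"
proof -
  have c1: "card (Ks ! j) = 1" if j: "j < n" for j
    using rest[OF R, of j] Kpos[OF R, of j] j kn by simp
  have "\<forall>j. \<exists>e. j < n \<longrightarrow> Ks ! j = {e}"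
    using c1 by (metis One_nat_def card_1_singleton_iff)
  then obtain e where e: "\<And>j. j < n \<Longrightarrow> Ks ! j = {e j}" by (metis choice)
  have e_lt: "e j < n" if "j < n" for j using Ksub[OF R, of j] e[OF that] that kn by auto
  have inj: "inj_on e {..<n}"
  proof (rule inj_onI)
    fix j j' assume jj: "j \<in> {..<n}" "j' \<in> {..<n}" "e j = e j'"
    show "j = j'"
    proof (rule ccontr)
      assume "j \<noteq> j'"
      then have "Ks ! j \<inter> Ks ! j' = {}" using rep_facts(6)[OF R] jj kn by simp
      then show False using e jj by simp
    qed
  qed
  have n0: "0 < n" using rep_facts(1)[OF R] kn by simp
  define chi where "chi i a = ((\<exists>j<n. Ks ! j = {i} \<and> [a] \<in> Ss ! j) \<noteq> (i = 0 \<and> s0))" for i a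
  have lin: "y \<in> S \<longleftrightarrow> odd (card {i. i < n \<and> chi i (y ! i)})" if y: "y \<in> words n" for y
  proof -
    define D where "D i = (\<exists>j<n. Ks ! j = {i} \<and> [y ! i] \<in> Ss ! j)" for i
    define G where "G = {j. j < n \<and> restrict_word y (Ks ! j) \<in> Ss ! j}"
    have rw1: "restrict_word y (Ks ! j) = [y ! e j]" if "j < n" for j
      unfolding restrict_word_def using e[OF that] by simp
    have img: "{i. i < n \<and> D i} = e ` G"
    proof (intro set_eqI iffI)
      fix i assume "i \<in> {i. i < n \<and> D i}"
      then obtain j where j: "i < n" "j < n" "Ks ! j = {i}" "[y ! i] \<in> Ss ! j" unfolding D_def by blast
      have "e j = i" using e[OF j(2)] j(3) by simp
      then show "i \<in> e ` G" unfolding G_def using j rw1[OF j(2)] by force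
    next
      fix i assume "i \<in> e ` G"
      then obtain j where j: "j < n" "restrict_word y (Ks ! j) \<in> Ss ! j" "i = e j" unfolding G_def by blast
      then show "i \<in> {i. i < n \<and> D i}" unfolding D_def using e_lt[OF j(1)] e[OF j(1)] rw1[OF j(1)] by auto
    qed
    have "G \<subseteq> {..<n}" unfolding G_def by auto
    then have cG: "card {i. i < n \<and> D i} = card G" unfolding img using inj
      by (metis card_image inj_on_subset)
    have yS: "y \<in> S \<longleftrightarrow> odd (card {i. i < n \<and> D i}) \<noteq> s0"
      using rep_facts(10)[OF R y] cG kn unfolding G_def by simp
    have chiD: "{i. i < n \<and> chi i (y ! i)} = {i. i < n \<and> (D i \<noteq> (i = 0 \<and> s0))}"
      unfolding chi_def D_def by simp
    show ?thesis
    proof (cases s0)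
      case False
      then show ?thesis using yS chiD by simp
    next
      case True
      define G' where "G' = {i. i < n \<and> D i}"
      have fG': "finite G'" unfolding G'_def by simp
      show ?thesis
      proof (cases "D 0")
        case True
        have eq: "{i. i < n \<and> (D i \<noteq> (i = 0 \<and> s0))} = G' - {0}" using \<open>s0\<close> True unfolding G'_def by auto
        have "0 \<in> G'" using True n0 unfolding G'_def by simp
        then have "card G' = Suc (card (G' - {0}))" using card.remove[OF fG'] by simp
        then show ?thesis using yS chiD eq \<open>s0\<close> unfolding G'_def by simp
      next
        case False
        have eq: "{i. i < n \<and> (D i \<noteq> (i = 0 \<and> s0))} = insert 0 G'" using \<open>s0\<close> False n0 unfolding G'_def by (auto intro: gr0I)
        have "0 \<notin> G'" using False unfolding G'_def by simp
        then have "card (insert 0 G') = Suc (card G')" using fG' by simp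
        then show ?thesis using yS chiD eq \<open>s0\<close> unfolding G'_def by simp
      qed
    qed
  qed
  have "linear_double_mds n S" unfolding linear_double_mds_def
    using S lin by blast
  then show ?thesis unfolding semilinear_def using C CS by blast
qed

theorem corollary5:
  fixes n k :: nat and Ks :: "nat set list" and S C :: "nat list set"
  assumes "double_mds n S"
    and "canonical_params n S k Ks"
    and "mds_code n C"
    and "C \<subseteq> S"
  shows "(((2 < k \<and> k < n) \<or> (k = 2 \<and> card (Ks ! 0) > 1 \<and> card (Ks ! 1) > 1))
           \<longrightarrow> decomposable n C)
         \<and> (k = n \<longrightarrow> semilinear n C)"
proof -
  obtain Ss s0 where R: "canonical_rep n S k Ks Ss s0" using assms(2) unfolding canonical_params_def by blast
  have A: "decomposable n C" if h: "(2 < k \<and> k < n) \<or> (k = 2 \<and> card (Ks ! 0) > 1 \<and> card (Ks ! 1) > 1)"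
  proof (cases "k = 2 \<and> card (Ks ! 0) > 1 \<and> card (Ks ! 1) > 1")
    case True
    have "(\<Sum>j<k. card (Ks ! j)) = card (Ks ! 0) + card (Ks ! 1)" using True by (simp add: numeral_2_eq_2)
    then have "n = card (Ks ! 0) + card (Ks ! 1)" using sumn[OF R] by simp
    then show ?thesis using part_a[OF R assms(3,4), of 0] True by simp
  next
    case False
    then have kk: "2 < k" "k < n" using h by auto
    have "\<exists>j0<k. 2 \<le> card (Ks ! j0)"
    proof (rule ccontr)
      assume "\<not> (\<exists>j0<k. 2 \<le> card (Ks ! j0))"
      then have "\<forall>j<k. card (Ks ! j) = 1" using Kpos[OF R] by (metis le_antisym not_less_eq_eq numeral_2_eq_2 One_nat_def)
      then have "(\<Sum>j<k. card (Ks ! j)) = k" by simp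
      then show False using sumn[OF R] kk by simp
    qed
    then obtain j0 where j0: "j0 < k" "2 \<le> card (Ks ! j0)" by blast
    have "2 \<le> n - card (Ks ! j0)" using rest[OF R j0(1)] kk by simp
    then show ?thesis using part_a[OF R assms(3,4) j0] by simp
  qed
  have B: "semilinear n C" if "k = n" using part_b[OF R assms(1,3,4) that] .
  show ?thesis using A B by blast
qed


end
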